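(* Let $d\ge1$, $M>0$, and let $f:[0,1]^d\to\mathbb{R}$ satisfy $|f(x)-f(y)|\le M\|x-y\|_\infty$ for all $x,y\in[0,1]^d$; let $g(x)=f(x)\bmod 1$. Let $m>1$ be an integer, $x_i=\frac{i-1}{m-1}$ for $i\in[m]$, and for $\mathbf{i}=(i_1,\dots,i_d)\in[m]^d$ let $x_{\mathbf i}=(x_{i_1},\dots,x_{i_d})$; let $\mathcal X=\{x_{\mathbf i}:\mathbf i\in[m]^d\}$. Let $\delta\in[0,1/2]$ and $\hat g:[0,1]^d\to[0,1)$ satisfy $d_w(\hat g(x_{\mathbf i}),g(x_{\mathbf i}))\le\delta$ for all $\mathbf i\in[m]^d$. Define values $\tilde f(x_{\mathbf i})$ for all $\mathbf i\in[m]^d$ by the following sequential procedure: set $\tilde f(x_{(1,\dots,1)})=\hat g(x_{(1,\dots,1)})$ (the corner $(0,\dots,0)$); then for $j=1,\dots,d$, for each $(i_1,\dots,i_{j-1})\in[m]^{j-1}$ (a single empty tuple when $j=1$), with $i_{j+1}=\dots=i_d=1$, and for $i_j=2,\dots,m$ in increasing order, set $$\tilde f(x_{\mathbf i})=\tilde f(x_{\mathbf i-e_j})+\begin{cases}D_j\hat g(x_{\mathbf i}) & \text{if } |D_j\hat g(x_{\mathbf i})|<1/2,\\ 1+D_j\hat g(x_{\mathbf i}) & \text{if } D_j\hat g(x_{\mathbf i})<-1/2,\\ -1+D_j\hat g(x_{\mathbf i}) & \text{if } D_j\hat g(x_{\mathbf i})>1/2,\end{cases}$$ where $\mathbf i=(i_1,\dots,i_j,1,\dots,1)$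 and $\mathbf i-e_j=(i_1,\dots,i_j-1,1,\dots,1)$. If $2\delta+\frac{M}{m-1}<\frac12$, then there exists $q^\star\in\mathbb{Z}$ such that $|\tilde f(x_{\mathbf i})+q^\star-f(x_{\mathbf i})|\le\delta$ for all $x_{\mathbf i}\in\mathcal X$.
   Context: For $a\in\mathbb{R}$, $a\bmod1=a-\lfloor a\rfloor\in[0,1)$. The wrap-around distance on $[0,1)$ is $d_w(a,b)=\min(|a-b|,1-|a-b|)$. $[m]=\{1,\dots,m\}$. For a function $h$ on the grid and $\mathbf i\in[m]^d$ with $i_j>1$, $D_jh(x_{\mathbf i})=h(x_{i_1},\dots,x_{i_j},\dots,x_{i_d})-h(x_{i_1},\dots,x_{i_j-1},\dots,x_{i_d})$. The procedure visits every grid point exactly once, each after its predecessor along coordinate $j$ has been assigned. *)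

theory Defs
  imports Complex_Main
begin

text \<open>Points of [0,1]^d are represented as functions nat => real whose coordinates
 0..d-1 are the d coordinates (coordinate k corresponds to the (k+1)-st coordinate
 of the paper) and which vanish at coordinates >= d.\<close>

definition cube :: "nat \<Rightarrow> (nat \<Rightarrow> real) set" where
  "cube d = {x. (\<forall>k<d. 0 \<le> x k \<and> x k \<le> 1) \<and> (\<forall>k\<ge>d. x k = 0)}"

definition supdist :: "nat \<Rightarrow> (nat \<Rightarrow> real) \<Rightarrow> (nat \<Rightarrow> real) \<Rightarrow> real" where
  "supdist d x y = Max ((\<lambda>k. \<bar>x k - y k\<bar>) ` {..<d})"

definition wrapdist :: "real \<Rightarrow> real \<Rightarrow> real" where
  "wrapdist a b = min \<bar>a - b\<bar> (1 - \<bar>a - b\<bar>)"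

definition grid :: "nat \<Rightarrow> nat \<Rightarrow> (nat \<Rightarrow> nat) set" where
  "grid d m = {i. (\<forall>k<d. 1 \<le> i k \<and> i k \<le> m) \<and> (\<forall>k\<ge>d. i k = 1)}"

definition gridpt :: "nat \<Rightarrow> (nat \<Rightarrow> nat) \<Rightarrow> (nat \<Rightarrow> real)" where
  "gridpt m i = (\<lambda>k. (real (i k) - 1) / (real m - 1))"

text \<open>The correction term added in the procedure (the case |t| = 1/2 is not
 specified by the paper; we keep t unchanged there).\<close>
definition wrapstep :: "real \<Rightarrow> real" where
  "wrapstep t = (if \<bar>t\<bar> < 1/2 then t else if t < -1/2 then 1 + t
                 else if t > 1/2 then -1 + t else t)"

text \<open>The sequential procedure: at the corner, ftilde = ghat; otherwise let j be the
 largest coordinate with i_j > 1 (so i_{j+1} = ... = i_d = 1); the value at i is the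
 value at i - e_j plus wrapstep (D_j ghat (x_i)).\<close>
function ftilde :: "nat \<Rightarrow> nat \<Rightarrow> ((nat \<Rightarrow> real) \<Rightarrow> real) \<Rightarrow> (nat \<Rightarrow> nat) \<Rightarrow> real" where
  "ftilde d m gh i =
     (if \<exists>k<d. 1 < i k then
        (let j = (GREATEST k. k < d \<and> 1 < i k); i' = i(j := i j - 1) in
           ftilde d m gh i' + wrapstep (gh (gridpt m i) - gh (gridpt m i')))
      else gh (gridpt m i))"
  by pat_completeness auto
termination
proof (relation "measure (\<lambda>(d, m, gh, i). \<Sum>k<d. i k)")
  show "wf (measure (\<lambda>(d, m, gh, i). \<Sum>k<d. i k))" by simp
next
  fix d m :: nat and gh :: "(nat \<Rightarrow> real) \<Rightarrow> real" and i :: "nat \<Rightarrow> nat" and j i'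
  assume ex: "\<exists>k<d. 1 < i k" and j: "j = (GREATEST k. k < d \<and> 1 < i k)"
    and i': "i' = i(j := i j - 1)"
  have jp: "j < d \<and> 1 < i j"
    using ex unfolding j by (metis (mono_tags, lifting) GreatestI_ex_nat less_imp_le_nat)
  have "(\<Sum>k<d. i' k) < (\<Sum>k<d. i k)"
    using jp i' by (intro sum_strict_mono_ex1) auto
  then show "((d, m, gh, i'), d, m, gh, i) \<in> measure (\<lambda>(d, m, gh, i). \<Sum>k<d. i k)"
    by simp
qed

end

theory Submission
  imports Defs
begin

lemma wrapstep_lemma:
  fixes s t :: real and n :: int
  assumes "\<bar>s\<bar> < 1/2" "-1 < t" "t < 1" "t = s + of_int n"
  shows "wrapstep t = s"
proof -
  have "n < 2" "n > -2" using assms by linarith+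
  hence "n = -1 \<or> n = 0 \<or> n = 1" by linarith
  thus ?thesis using assms unfolding wrapstep_def by (auto split: if_splits)
qed

lemma wrap_int:
  fixes a b :: real
  assumes "wrapdist a (frac b) \<le> \<delta>" "0 \<le> a" "a < 1"
  shows "\<exists>p::int. \<bar>a - b - of_int p\<bar> \<le> \<delta>"
proof -
  have f0: "0 \<le> b - of_int \<lfloor>b\<rfloor>" "b - of_int \<lfloor>b\<rfloor> < 1" by linarith+
  have fb: "frac b = b - of_int \<lfloor>b\<rfloor>" by (simp add: frac_def)
  show ?thesis
  proof (cases "\<bar>a - frac b\<bar> \<le> \<delta>")
    case True
    thus ?thesis using fb by (intro exI[of _ "- \<lfloor>b\<rfloor>"]) auto
  next
    case False
    hence h: "1 - \<bar>a - frac b\<bar> \<le> \<delta>" using assms(1) unfolding wrapdist_def by linarith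
    show ?thesis
    proof (cases "a \<ge> frac b")
      case True
      hence h2: "1 - (a - frac b) \<le> \<delta>" using h by simp
      have e: "a - b - of_int (- \<lfloor>b\<rfloor> + 1) = (a - frac b) - 1" using fb by simp
      have "(a - frac b) - 1 \<le> \<delta>" "- ((a - frac b) - 1) \<le> \<delta>" using h2 f0 fb assms(2,3) by linarith+
      hence "\<bar>a - b - of_int (- \<lfloor>b\<rfloor> + 1)\<bar> \<le> \<delta>" unfolding e abs_le_iff by blast
      thus ?thesis by blast
    next
      case False
      hence h2: "1 - (frac b - a) \<le> \<delta>" using h by simp
      have e: "a - b - of_int (- \<lfloor>b\<rfloor> - 1) = (a - frac b) + 1" using fb by simp
      have "(a - frac b) + 1 \<le> \<delta>" "- ((a - frac b) + 1) \<le> \<delta>" using h2 f0 fb assms(2,3) by linarith+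
      hence "\<bar>a - b - of_int (- \<lfloor>b\<rfloor> - 1)\<bar> \<le> \<delta>" unfolding e abs_le_iff by blast
      thus ?thesis by blast
    qed
  qed
qed

lemma gridpt_cube:
  assumes "i \<in> grid d m" "m > 1"
  shows "gridpt m i \<in> cube d"
proof -
  have "real m - 1 > 0" using assms by simp
  thus ?thesis using assms unfolding grid_def cube_def gridpt_def
    by (auto simp: divide_simps)
qed

theorem mainTheorem4:
  fixes d m :: nat and M \<delta> :: real and f gh :: "(nat \<Rightarrow> real) \<Rightarrow> real"
  assumes "d \<ge> 1" and "M > 0"
    and "\<forall>x\<in>cube d. \<forall>y\<in>cube d. \<bar>f x - f y\<bar> \<le> M * supdist d x y"
    and "m > 1"
    and "0 \<le> \<delta>" and "\<delta> \<le> 1/2"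
    and "\<forall>x\<in>cube d. 0 \<le> gh x \<and> gh x < 1"
    and "\<forall>i\<in>grid d m. wrapdist (gh (gridpt m i)) (frac (f (gridpt m i))) \<le> \<delta>"
    and "2 * \<delta> + M / (real m - 1) < 1/2"
  shows "\<exists>q::int. \<forall>i\<in>grid d m. \<bar>ftilde d m gh i + real_of_int q - f (gridpt m i)\<bar> \<le> \<delta>"
proof -
  have "\<forall>i\<in>grid d m. \<exists>p::int. \<bar>gh (gridpt m i) - f (gridpt m i) - of_int p\<bar> \<le> \<delta>"
  proof
    fix i assume i: "i \<in> grid d m"
    show "\<exists>p::int. \<bar>gh (gridpt m i) - f (gridpt m i) - of_int p\<bar> \<le> \<delta>"
      using wrap_int[of "gh (gridpt m i)" "f (gridpt m i)" \<delta>] assms(7,8) i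
        gridpt_cube[OF i assms(4)] by auto
  qed
  then obtain P :: "(nat \<Rightarrow> nat) \<Rightarrow> int" where
    P: "\<forall>i\<in>grid d m. \<bar>gh (gridpt m i) - f (gridpt m i) - of_int (P i)\<bar> \<le> \<delta>"
    by metis
  define c :: "nat \<Rightarrow> nat" where "c = (\<lambda>k. 1)"
  have mpos: "real m - 1 > 0" using assms(4) by simp
  have key0: "\<forall>i. (\<Sum>k<d. i k) = n \<longrightarrow> i \<in> grid d m \<longrightarrow>
      ftilde d m gh i = gh (gridpt m i) - of_int (P i) + of_int (P c)" for n
  proof (induction n rule: less_induct)
    case (less n)
    note [simp del] = ftilde.simps
    show ?case
    proof (intro allI impI)
      fix i assume sn: "(\<Sum>k<d. i k) = n" and i: "i \<in> grid d m"
      show "ftilde d m gh i = gh (gridpt m i) - of_int (P i) + of_int (P c)"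
      proof (cases "\<exists>k<d. 1 < i k")
        case False
        have "i = c"
        proof -
          have "i k = 1" for k
          proof (cases "k < d")
            case True
            thus ?thesis using False i unfolding grid_def by force
          next
            case False
            thus ?thesis using i unfolding grid_def by simp
          qed
          thus ?thesis unfolding c_def by auto
        qed
        moreover have "ftilde d m gh i = gh (gridpt m i)"
          by (subst ftilde.simps, subst if_not_P[OF False], rule refl)
        ultimately show ?thesis by simp
      next
        case True
        define j where "j = (GREATEST k. k < d \<and> 1 < i k)"
        define i' where "i' = i(j := i j - 1)"
        have jp: "j < d \<and> 1 < i j"
          using True unfolding j_def by (metis (mono_tags, lifting) GreatestI_ex_nat less_imp_le_nat)
        have i': "i' \<in> grid d m" using i jp unfolding i'_def grid_def by auto
        have lt: "(\<Sum>k<d. i' k) < n"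
          unfolding sn[symmetric] using jp unfolding i'_def by (intro sum_strict_mono_ex1) auto
        have IH: "ftilde d m gh i' = gh (gridpt m i') - of_int (P i') + of_int (P c)"
          using less.IH[OF lt] i' by blast
        have ft: "ftilde d m gh i = ftilde d m gh i' + wrapstep (gh (gridpt m i) - gh (gridpt m i'))"
          using True unfolding j_def i'_def by (subst ftilde.simps) (simp add: Let_def del: ftilde.simps)
        have ci: "gridpt m i \<in> cube d" "gridpt m i' \<in> cube d"
          using gridpt_cube i i' assms(4) by auto
        have sd: "supdist d (gridpt m i) (gridpt m i') \<le> 1 / (real m - 1)"
          unfolding supdist_def
        proof (subst Max_le_iff)
          show "finite ((\<lambda>k. \<bar>gridpt m i k - gridpt m i' k\<bar>) ` {..<d})" by simp
          show "(\<lambda>k. \<bar>gridpt m i k - gridpt m i' k\<bar>) ` {..<d} \<noteq> {}" using assms(1) by (simp add: lessThan_empty_iff)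
          show "\<forall>a\<in>(\<lambda>k. \<bar>gridpt m i k - gridpt m i' k\<bar>) ` {..<d}. a \<le> 1 / (real m - 1)"
          proof
            fix a assume "a \<in> (\<lambda>k. \<bar>gridpt m i k - gridpt m i' k\<bar>) ` {..<d}"
            then obtain k where a: "a = \<bar>gridpt m i k - gridpt m i' k\<bar>" by auto
            show "a \<le> 1 / (real m - 1)"
            proof (cases "k = j")
              case True
              have "real (i j - 1) = real (i j) - 1" using jp by auto
              hence "gridpt m i k - gridpt m i' k = 1 / (real m - 1)"
                using True mpos unfolding gridpt_def i'_def by (simp add: divide_simps)
              thus ?thesis using a mpos by simp
            next
              case False
              thus ?thesis using a mpos unfolding gridpt_def i'_def by simp
            qed
          qed
        qed
        have fl: "\<bar>f (gridpt m i) - f (gridpt m i')\<bar> \<le> M / (real m - 1)"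
        proof -
          have "\<bar>f (gridpt m i) - f (gridpt m i')\<bar> \<le> M * supdist d (gridpt m i) (gridpt m i')"
            using assms(3) ci by blast
          also have "\<dots> \<le> M * (1 / (real m - 1))"
            using sd assms(2) by (intro mult_left_mono) auto
          finally show ?thesis by simp
        qed
        define s where "s = (gh (gridpt m i) - f (gridpt m i) - of_int (P i))
            - (gh (gridpt m i') - f (gridpt m i') - of_int (P i')) + (f (gridpt m i) - f (gridpt m i'))"
        have e1: "\<bar>gh (gridpt m i) - f (gridpt m i) - of_int (P i)\<bar> \<le> \<delta>" using P i by blast
        have e2: "\<bar>gh (gridpt m i') - f (gridpt m i') - of_int (P i')\<bar> \<le> \<delta>" using P i' by blast
        have sb: "\<bar>s\<bar> < 1/2" using e1 e2 fl assms(9) unfolding s_def abs_le_iff abs_less_iff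
          by linarith
        have teq: "gh (gridpt m i) - gh (gridpt m i') = s + of_int (P i - P i')"
          unfolding s_def by simp
        have bnd: "0 \<le> gh (gridpt m i)" "gh (gridpt m i) < 1" "0 \<le> gh (gridpt m i')" "gh (gridpt m i') < 1"
          using assms(7) ci by auto
        have tb: "-1 < gh (gridpt m i) - gh (gridpt m i')"
          "gh (gridpt m i) - gh (gridpt m i') < 1" using bnd by linarith+
        have "wrapstep (gh (gridpt m i) - gh (gridpt m i')) = s"
          by (rule wrapstep_lemma[OF sb tb teq])
        thus ?thesis using ft IH unfolding s_def by simp
      qed
    qed
  qed
  have key: "i \<in> grid d m \<Longrightarrow> ftilde d m gh i = gh (gridpt m i) - of_int (P i) + of_int (P c)"
    for i using key0 by blast
  show ?thesis
  proof (intro exI[of _ "- P c"] ballI)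
    fix i assume i: "i \<in> grid d m"
    note [simp del] = ftilde.simps
    show "\<bar>ftilde d m gh i + real_of_int (- P c) - f (gridpt m i)\<bar> \<le> \<delta>"
      using key[OF i] P i by auto
  qed
qed

end
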